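(* Let $f$, $u_{0s}$, $c_0$, $b_0$, $p$ be as in the context and assume $M:=\sup_{x\le0}|b_0(x)c_0(x)|<\infty$. Then for every $\sigma\in\mathbb{C}$ with $\Re(\sigma)>M/c_0(0)$, $$\int_{-\infty}^{0}b_0(\xi)e^{-\sigma p(\xi)}\,d\xi\neq c_0(0);$$ that is, there are no eigenvalues (roots of the dispersion relation) with real part exceeding $M/c_0(0)$.
   Context: Let $q>0$ and let $f:(-\infty,0]\times(0,\infty)\to[0,\infty)$ be such that for each $u>0$, $x\mapsto f(x,u)$ is continuous and integrable, $\partial f/\partial u$ exists and is continuous, and $\int_{-\infty}^0 f(x,u)\,dx=q/2$ independently of $u$. Let $u_{0s}=2\sqrt q$. Define $c_0(x)=\sqrt{2\int_{-\infty}^x f(y,u_{0s})\,dy}$ for $x\le0$ (so $c_0(0)=u_{0s}/2$), and assume $c_0(x)>0$ for all $x\le0$. Define $b_0(x)=\frac{\partial f}{\partial u}(x,u_{0s})+\frac{f(x,u_{0s})}{2c_0(x)}$ and $p(x)=\int_x^0 dy/c_0(y)$. An eigenvalue is a $\sigma$ with $\Re\sigma>0$ satisfying $\int_{-\infty}^{0}b_0(\xi)e^{-\sigma p(\xi)}d\xi=c_0(0)$. *)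

theory Defs
  imports "HOL-Analysis.Analysis"
begin

text \<open>Setting: f :: real => real => real, f x u for x <= 0, u > 0; fu x u is the
partial derivative of f in u.\<close>

definition u0s :: "real \<Rightarrow> real" where
  "u0s q = 2 * sqrt q"

definition c0 :: "(real \<Rightarrow> real \<Rightarrow> real) \<Rightarrow> real \<Rightarrow> real \<Rightarrow> real" where
  "c0 f q x = sqrt (2 * integral {..x} (\<lambda>y. f y (u0s q)))"

definition b0 :: "(real \<Rightarrow> real \<Rightarrow> real) \<Rightarrow> (real \<Rightarrow> real \<Rightarrow> real) \<Rightarrow> real \<Rightarrow> real \<Rightarrow> real" where
  "b0 f fu q x = fu x (u0s q) + f x (u0s q) / (2 * c0 f q x)"

definition pp :: "(real \<Rightarrow> real \<Rightarrow> real) \<Rightarrow> real \<Rightarrow> real \<Rightarrow> real" where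
  "pp f q x = integral {x..0} (\<lambda>y. 1 / c0 f q y)"

end

theory Submission
  imports Defs
begin


lemma int_sub:
  fixes h :: "real \<Rightarrow> real"
  assumes "h integrable_on {..0}" "\<And>x. x \<le> 0 \<Longrightarrow> h x \<ge> 0" "x \<le> 0"
  shows "h integrable_on {..x}"
proof -
  have "h absolutely_integrable_on {..0}"
    using assms by (intro nonnegative_absolutely_integrable_1) auto
  then have "h absolutely_integrable_on {..x}"
    by (rule set_integrable_subset) (use assms in auto)
  then show ?thesis using absolutely_integrable_on_def by blast
qed

lemma int_split:
  fixes h :: "real \<Rightarrow> real"
  assumes "h integrable_on {..0}" "\<And>x. x \<le> 0 \<Longrightarrow> h x \<ge> 0" "a \<le> x" "x \<le> 0"
  shows "integral {..x} h = integral {..a} h + integral {a..x} h"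
proof -
  have ia: "h integrable_on {..a}" using int_sub assms by auto
  have ix: "h integrable_on {..x}" using int_sub assms by auto
  have iax: "h integrable_on {a..x}" using integrable_on_subinterval[OF ix] by auto
  have "(h has_integral (integral {..a} h + integral {a..x} h)) ({..a} \<union> {a..x})"
    apply (rule has_integral_Un)
    using ia iax apply auto[2]
    apply (rule negligible_subset[of "{a}"]) by auto
  moreover have "{..a} \<union> {a..x} = {..x}" using assms by auto
  ultimately show ?thesis by (metis integral_unique)
qed



theorem theorem2:
  fixes f fu :: "real \<Rightarrow> real \<Rightarrow> real" and q :: real
  assumes q_pos: "q > 0"
    and f_nonneg: "\<And>x u. x \<le> 0 \<Longrightarrow> u > 0 \<Longrightarrow> f x u \<ge> 0"
    and f_cont: "\<And>u. u > 0 \<Longrightarrow> continuous_on {..0} (\<lambda>x. f x u)"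
    and f_int: "\<And>u. u > 0 \<Longrightarrow> (\<lambda>x. f x u) integrable_on {..0}"
    and f_mass: "\<And>u. u > 0 \<Longrightarrow> integral {..0} (\<lambda>x. f x u) = q / 2"
    and fu_deriv: "\<And>x u. x \<le> 0 \<Longrightarrow> u > 0 \<Longrightarrow> ((\<lambda>v. f x v) has_real_derivative fu x u) (at u)"
    and fu_cont: "\<And>u. u > 0 \<Longrightarrow> continuous_on {..0} (\<lambda>x. fu x u)"
    and c0_pos: "\<And>x. x \<le> 0 \<Longrightarrow> c0 f q x > 0"
    and M_fin: "bdd_above ((\<lambda>x. \<bar>b0 f fu q x * c0 f q x\<bar>) ` {..0})"
  shows "\<forall>\<sigma>::complex. Re \<sigma> > (SUP x\<in>{..0::real}. \<bar>b0 f fu q x * c0 f q x\<bar>) / c0 f q 0 \<longrightarrow>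
           \<not> ((\<lambda>\<xi>. complex_of_real (b0 f fu q \<xi>) * exp (- \<sigma> * complex_of_real (pp f q \<xi>)))
                 has_integral complex_of_real (c0 f q 0)) {..0}"

proof (intro allI impI notI)
  fix \<sigma> :: complex
  define h where "h = (\<lambda>y. f y (u0s q))"
  define M where "M = (SUP x\<in>{..0::real}. \<bar>b0 f fu q x * c0 f q x\<bar>)"
  define P where "P = pp f q"
  define s where "s = Re \<sigma>"
  define C where "C = c0 f q"
  assume sgt: "M / c0 f q 0 < Re \<sigma>"
  assume hasint: "((\<lambda>\<xi>. complex_of_real (b0 f fu q \<xi>) * exp (- \<sigma> * complex_of_real (pp f q \<xi>)))
                 has_integral complex_of_real (c0 f q 0)) {..0}"
  have u0: "u0s q > 0" using q_pos by (simp add: u0s_def)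
  have hint: "h integrable_on {..0}" using f_int[OF u0] by (simp add: h_def)
  have hnn: "\<And>x. x \<le> 0 \<Longrightarrow> h x \<ge> 0" using f_nonneg[OF _ u0] by (simp add: h_def)
  have Cpos: "\<And>x. x \<le> 0 \<Longrightarrow> C x > 0" using c0_pos by (simp add: C_def)
  have Cdef: "\<And>x. C x = sqrt (2 * integral {..x} h)" by (simp add: C_def c0_def h_def)
  have Mge: "\<bar>b0 f fu q x * c0 f q x\<bar> \<le> M" if "x \<le> 0" for x
    unfolding M_def using M_fin that by (intro cSUP_upper) auto
  have M0: "M \<ge> 0" using Mge[of 0] by linarith
  have C0: "C 0 > 0" using Cpos by auto
  have spos: "s > 0" using sgt M0 C0 by (simp add: s_def C_def) (smt (verit) divide_nonneg_pos)
  have Ms: "M / s < C 0" using sgt spos C0 by (simp add: s_def C_def field_simps)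
  have Ccont: "continuous_on {a..0} C" if a: "a \<le> 0" for a
  proof -
    have ia: "h integrable_on {a..0}" using integrable_on_subinterval[OF hint] by auto
    have "continuous_on {a..0} (\<lambda>x. sqrt (2 * (integral {..a} h + integral {a..x} h)))"
      by (intro continuous_on_real_sqrt continuous_on_mult continuous_on_const continuous_on_add indefinite_integral_continuous_1[OF ia])
    moreover have "sqrt (2 * (integral {..a} h + integral {a..x} h)) = C x" if "x \<in> {a..0}" for x
    proof -
      have "integral {..x} h = integral {..a} h + integral {a..x} h"
        using that by (intro int_split[OF hint hnn]) auto
      then show ?thesis unfolding Cdef by metis
    qed
    ultimately show ?thesis by (rule continuous_on_eq) auto
  qed
  have rcont: "continuous_on {a..0} (\<lambda>y. 1 / C y)" if a: "a \<le> 0" for a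
  proof (intro continuous_on_divide continuous_on_const Ccont[OF a] ballI)
    fix x assume "x \<in> {a..0}" then have "C x > 0" using Cpos by auto
    then show "C x \<noteq> 0" by simp
  qed
  have Pdef: "P x = integral {x..0} (\<lambda>y. 1 / C y)" for x by (simp add: P_def pp_def C_def)
  have pder: "(P has_real_derivative -(1 / C x)) (at x within {a..0})" if a: "a \<le> 0" and x: "x \<in> {a..0}" for a x
  proof -
    have ri: "(\<lambda>y. 1 / C y) integrable_on {a..0}" using rcont[OF a] integrable_continuous_real by blast
    have "((\<lambda>u. integral {a..u} (\<lambda>y. 1 / C y)) has_real_derivative (1 / C x)) (at x within {a..0})"
      unfolding has_real_derivative_iff_has_vector_derivative
      by (rule integral_has_vector_derivative[OF rcont[OF a] x])
    then have d1: "((\<lambda>u. integral {a..0} (\<lambda>y. 1 / C y) - integral {a..u} (\<lambda>y. 1 / C y)) has_real_derivative -(1 / C x)) (at x within {a..0})"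
      using DERIV_diff[OF DERIV_const] by fastforce
    have eqP: "\<And>y. y \<in> {a..0} \<Longrightarrow> integral {a..0} (\<lambda>y. 1 / C y) - integral {a..y} (\<lambda>y. 1 / C y) = P y"
      using Henstock_Kurzweil_Integration.integral_combine[OF _ _ ri] by (auto simp: Pdef algebra_simps)
    show ?thesis
      by (rule has_field_derivative_transform_within[OF d1 zero_less_one x]) (rule eqP)
  qed
  define g where "g = (\<lambda>x. M * exp (- s * P x) / C x)"
  define G where "G = (\<lambda>x. M * exp (- s * P x) / s)"
  have gnn: "g x \<ge> 0" if "x \<le> 0" for x using M0 Cpos[OF that] by (simp add: g_def)
  have P0: "P 0 = 0" by (simp add: Pdef)
  have Pnn: "P a \<ge> 0" if a: "a \<le> 0" for a
  proof -
    have "0 \<le> integral {a..0} (\<lambda>y. 1 / C y)"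
    proof (rule integral_nonneg)
      show "(\<lambda>y. 1 / C y) integrable_on {a..0}" by (rule integrable_continuous_real[OF rcont[OF a]])
      fix y assume "y \<in> {a..0}" then have "C y > 0" using Cpos by auto
      then show "0 \<le> 1 / C y" by simp
    qed
    then show ?thesis by (simp add: Pdef)
  qed
  have gint: "(g has_integral (G 0 - G a)) {a..0}" if a: "a \<le> 0" for a
  proof (rule fundamental_theorem_of_calculus[OF a])
    fix x assume x: "x \<in> {a..0}"
    have "(G has_real_derivative g x) (at x within {a..0})"
      unfolding G_def apply (rule derivative_eq_intros pder[OF a x] refl)+
      using spos by (auto simp: g_def field_simps)
    then show "(G has_vector_derivative g x) (at x within {a..0})"
      by (simp add: has_real_derivative_iff_has_vector_derivative)
  qed
  have Gbd: "0 \<le> G 0 - G a \<and> G 0 - G a \<le> M / s" if a: "a \<le> 0" for a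
  proof -
    have "exp (- s * P a) \<le> 1" using Pnn[OF a] spos by (simp add: mult_nonneg_nonneg)
    then show ?thesis using spos M0 P0
      by (auto simp: G_def field_simps mult_left_le intro!: mult_nonneg_nonneg)
  qed
  define gk where "gk = (\<lambda>k::nat. \<lambda>x. if x \<in> {- real k..0} then g x else 0)"
  have gkint: "(gk k has_integral (G 0 - G (- real k))) {..0}" for k
    unfolding gk_def by (subst has_integral_restrict) (auto intro: gint)
  have mc: "g integrable_on {..0} \<and> ((\<lambda>k. integral {..0} (gk k)) \<longlonglongrightarrow> integral {..0} g)"
  proof (rule monotone_convergence_increasing)
    show "gk k integrable_on {..0}" for k using gkint by blast
    show "gk k x \<le> gk (Suc k) x" if "x \<in> {..0}" for k x
      using that gnn by (auto simp: gk_def)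
    show "(\<lambda>k. gk k x) \<longlonglongrightarrow> g x" if "x \<in> {..0}" for x
    proof (rule tendsto_eventually)
      show "\<forall>\<^sub>F k in sequentially. gk k x = g x"
        unfolding eventually_sequentially
      proof (rule exI[of _ "nat \<lceil>- x\<rceil>"], intro allI impI)
        fix n assume n: "nat \<lceil>- x\<rceil> \<le> n"
        have "- x \<le> real (nat \<lceil>- x\<rceil>)" by (rule real_nat_ceiling_ge)
        also have "\<dots> \<le> real n" using n by simp
        finally show "gk n x = g x" using that by (simp add: gk_def)
      qed
    qed
    show "bounded (range (\<lambda>k. integral {..0} (gk k)))"
      unfolding bounded_iff using gkint Gbd
    proof (intro exI[of _ "M / s"] ballI)
      fix y assume "y \<in> range (\<lambda>k. integral {..0} (gk k))"
      then obtain k where k: "y = integral {..0} (gk k)" by auto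
      have "y = G 0 - G (- real k)" using k gkint[of k] by (simp add: integral_unique)
      then show "norm y \<le> M / s" using Gbd[of "- real k"] by auto
    qed
  qed
  have intg: "integral {..0} g \<le> M / s"
  proof (rule LIMSEQ_le_const2)
    show "(\<lambda>k. integral {..0} (gk k)) \<longlonglongrightarrow> integral {..0} g" using mc by blast
    show "\<exists>N. \<forall>n\<ge>N. integral {..0} (gk n) \<le> M / s"
    proof (intro exI[of _ 0] allI impI)
      fix n :: nat
      have "integral {..0} (gk n) = G 0 - G (- real n)" using gkint[of n] by (simp add: integral_unique)
      then show "integral {..0} (gk n) \<le> M / s" using Gbd[of "- real n"] by auto
    qed
  qed
  have "norm (integral {..0} (\<lambda>\<xi>. complex_of_real (b0 f fu q \<xi>) * exp (- \<sigma> * complex_of_real (pp f q \<xi>))))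
        \<le> integral {..0} g"
  proof (rule Henstock_Kurzweil_Integration.integral_norm_bound_integral)
    show "(\<lambda>\<xi>. complex_of_real (b0 f fu q \<xi>) * exp (- \<sigma> * complex_of_real (pp f q \<xi>))) integrable_on {..0}"
      using hasint by blast
    show "g integrable_on {..0}" using mc by blast
    fix x :: real assume x: "x \<in> {..0}"
    have cx: "C x > 0" using Cpos x by auto
    have "\<bar>b0 f fu q x\<bar> * C x \<le> M" using Mge[of x] x cx by (simp add: C_def abs_mult)
    then have bb: "\<bar>b0 f fu q x\<bar> \<le> M / C x" using cx by (simp add: field_simps)
    have "norm (complex_of_real (b0 f fu q x) * exp (- \<sigma> * complex_of_real (pp f q x)))
          = \<bar>b0 f fu q x\<bar> * exp (- s * P x)"
      by (simp add: norm_mult s_def P_def)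
    also have "\<dots> \<le> M / C x * exp (- s * P x)" using bb by (intro mult_right_mono) auto
    finally show "norm (complex_of_real (b0 f fu q x) * exp (- \<sigma> * complex_of_real (pp f q x))) \<le> g x"
      by (simp add: g_def)
  qed
  moreover have "integral {..0} (\<lambda>\<xi>. complex_of_real (b0 f fu q \<xi>) * exp (- \<sigma> * complex_of_real (pp f q \<xi>))) = complex_of_real (C 0)"
    using hasint by (simp add: integral_unique C_def)
  ultimately have "C 0 \<le> M / s" using intg C0 by simp
  with Ms show False by simp
qed

end
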